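(* Let $t\in\{w,m\}$ index two types of individuals, with exogenous masses $\mu_w>0,\mu_m>0$, and let $r:=\mu_w/\mu_m$. For each type $t$, let $\Delta_t:=Y_{1t}-Y_{2t}$ (difference of random potential incomes in sectors 1 and 2) have cumulative distribution function $F_{\Delta_t}$, and let $h_t:(0,1)\to[0,\infty)$. Assume that for each $t$: $h_t$ is decreasing and continuously differentiable; $F_{\Delta_t}$ is continuously differentiable with a continuous inverse $F_{\Delta_t}^{-1}$; and $\mathbb P[\Delta_t>0]\in(0,1)$. Define the efficient compositions $r^e_t:=\mathbb P[\Delta_t>0]$, $t\in\{w,m\}$. If $r^e_w<r^e_m$, then there exists an equilibrium $(r_w^*,r_m^* )$ such that $r_w^*<r_w^e<r_m^e<r_m^*$. Moreover, there is no equilibrium $(r_w^*,r_m^* )$ such that $r_w^e<r_w^*<r_m^*<r_m^e$.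
   Context: For $x,y\in(0,1)$, $z>0$, define $g_t(x,y,z):=h_t\left(\frac{1}{1+z y/x}\right)-h_t\left(\frac{1}{1+z(1-y)/(1-x)}\right)$. A composition is a pair $(r_w,r_m)\in[0,1]^2$, $r_t$ being the share of type-$t$ individuals in sector 1. An equilibrium is a composition $(r_w^*,r_m^* )$ such that: (i) if $r_w^*\in(0,1)$ then $F_{\Delta_w}^{-1}(1-r_w^* )=g_w(r_w^*,r_m^*,1/r)$, and if $r_m^*\in(0,1)$ then $F_{\Delta_m}^{-1}(1-r_m^* )=g_m(r_m^*,r_w^*,r)$; (ii) if $r_w^*=0$, there is $\bar\delta>0$ such that for all $0<\delta<\bar\delta$, $F_{\Delta_w}^{-1}(1-\delta)\le g_w(\delta,r_m^*,1/r)$; (iii) if $r_m^*=1$, there is $\bar\delta>0$ such that for all $0<\delta<\bar\delta$, $F_{\Delta_m}^{-1}(\delta)\ge g_m(1-\delta,r_w^*,r)$; (iv) symmetrically, if $r_w^*=1$, there is $\bar\delta>0$ such that for all $0<\delta<\bar\delta$, $F_{\Delta_w}^{-1}(\delta)\ge g_w(1-\delta,r_m^*,1/r)$, and if $r_m^*=0$, there is $\bar\delta>0$ such that for all $0<\delta<\bar\delta$, $F_{\Delta_m}^{-1}(1-\delta)\le g_m(\delta,r_w^*,r)$. *)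

theory Defs
  imports "HOL-Probability.Probability"
begin

text \<open>Extension of h (defined on the open interval (0,1)) to the point 1 by its
  left limit; needed because g_t(x,y,z) is evaluated at y = 0 or y = 1 in the
  boundary equilibrium conditions, where one argument of h equals 1.\<close>
definition hext :: "(real \<Rightarrow> real) \<Rightarrow> real \<Rightarrow> real" where
  "hext h p = (if p < 1 then h p else Lim (at_left 1) h)"

definition gfun :: "(real \<Rightarrow> real) \<Rightarrow> real \<Rightarrow> real \<Rightarrow> real \<Rightarrow> real" where
  "gfun h x y z = hext h (1 / (1 + z * y / x)) - hext h (1 / (1 + z * (1 - y) / (1 - x)))"

definition cont_inverse_cdf :: "(real \<Rightarrow> real) \<Rightarrow> (real \<Rightarrow> real) \<Rightarrow> bool" where
  "cont_inverse_cdf F Finv \<longleftrightarrow>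
     continuous_on {0<..<1} Finv \<and>
     (\<forall>p\<in>{0<..<1}. F (Finv p) = p) \<and>
     (\<forall>x. 0 < F x \<and> F x < 1 \<longrightarrow> Finv (F x) = x)"

text \<open>Equilibrium composition (rw, rm); Fwinv, Fminv are the inverse cdfs of
  Delta_w, Delta_m, hw, hm the functions h_w, h_m, and r = mu_w / mu_m.\<close>
definition equilibrium ::
  "(real \<Rightarrow> real) \<Rightarrow> (real \<Rightarrow> real) \<Rightarrow> (real \<Rightarrow> real) \<Rightarrow> (real \<Rightarrow> real) \<Rightarrow> real \<Rightarrow> real \<Rightarrow> real \<Rightarrow> bool"
where
  "equilibrium Fwinv Fminv hw hm r rw rm \<longleftrightarrow>
     rw \<in> {0..1} \<and> rm \<in> {0..1} \<and>
     (0 < rw \<and> rw < 1 \<longrightarrow> Fwinv (1 - rw) = gfun hw rw rm (1 / r)) \<and>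
     (0 < rm \<and> rm < 1 \<longrightarrow> Fminv (1 - rm) = gfun hm rm rw r) \<and>
     (rw = 0 \<longrightarrow> (\<exists>db>0. \<forall>\<delta>. 0 < \<delta> \<and> \<delta> < db \<and> \<delta> < 1 \<longrightarrow>
                      Fwinv (1 - \<delta>) \<le> gfun hw \<delta> rm (1 / r))) \<and>
     (rm = 1 \<longrightarrow> (\<exists>db>0. \<forall>\<delta>. 0 < \<delta> \<and> \<delta> < db \<and> \<delta> < 1 \<longrightarrow>
                      Fminv \<delta> \<ge> gfun hm (1 - \<delta>) rw r)) \<and>
     (rw = 1 \<longrightarrow> (\<exists>db>0. \<forall>\<delta>. 0 < \<delta> \<and> \<delta> < db \<and> \<delta> < 1 \<longrightarrow>
                      Fwinv \<delta> \<ge> gfun hw (1 - \<delta>) rm (1 / r))) \<and>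
     (rm = 0 \<longrightarrow> (\<exists>db>0. \<forall>\<delta>. 0 < \<delta> \<and> \<delta> < db \<and> \<delta> < 1 \<longrightarrow>
                      Fminv (1 - \<delta>) \<le> gfun hm \<delta> rw r))"

end

theory Submission
  imports Defs
begin


lemma cdf_facts:
  assumes P: "prob_space M" and D: "D \<in> borel_measurable M"
  shows "cdf (distr M borel D) 0 = 1 - measure M {\<omega>\<in>space M. D \<omega> > 0}"
    and "x \<le> y \<Longrightarrow> cdf (distr M borel D) x \<le> cdf (distr M borel D) y"
proof -
  interpret prob_space M by fact
  have rd: "real_distribution (distr M borel D)" using D by simp
  show "x \<le> y \<Longrightarrow> cdf (distr M borel D) x \<le> cdf (distr M borel D) y"
    using real_distribution.finite_borel_measure_M[OF rd] finite_borel_measure.cdf_nondecreasing by blast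
  have "cdf (distr M borel D) 0 = measure M (D -` {..0} \<inter> space M)"
    unfolding cdf_def using D by (simp add: measure_distr)
  also have "D -` {..0} \<inter> space M = space M - {\<omega>\<in>space M. D \<omega> > 0}" by auto
  also have "measure M (space M - {\<omega>\<in>space M. D \<omega> > 0}) = 1 - measure M {\<omega>\<in>space M. D \<omega> > 0}"
    by (rule prob_compl) (use D in measurable)
  finally show "cdf (distr M borel D) 0 = 1 - measure M {\<omega>\<in>space M. D \<omega> > 0}" .
qed




lemma Finv_facts:
  assumes ci: "cont_inverse_cdf F Finv" and mono: "\<And>x y. x \<le> y \<Longrightarrow> F x \<le> F y"
    and F0: "F 0 = 1 - e" and e: "0 < e" "e < 1"
  shows "Finv (1 - e) = 0"
    and "\<And>x. 0 < x \<Longrightarrow> x < e \<Longrightarrow> Finv (1 - x) > 0"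
    and "\<And>x. e < x \<Longrightarrow> x < 1 \<Longrightarrow> Finv (1 - x) < 0"
proof -
  have ri: "\<And>p. 0 < p \<Longrightarrow> p < 1 \<Longrightarrow> F (Finv p) = p" using ci unfolding cont_inverse_cdf_def by auto
  have "0 < F 0 \<and> F 0 < 1" using F0 e by simp
  then have li: "Finv (F 0) = 0" using ci unfolding cont_inverse_cdf_def by blast
  show z: "Finv (1 - e) = 0" using li F0 by simp
  have sm: "Finv p < Finv q" if "0 < p" "p < q" "q < 1" for p q
  proof (rule ccontr)
    assume "\<not> Finv p < Finv q"
    then have "F (Finv q) \<le> F (Finv p)" using mono by simp
    then show False using ri[of p] ri[of q] that by simp
  qed
  show "\<And>x. 0 < x \<Longrightarrow> x < e \<Longrightarrow> Finv (1 - x) > 0"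
    using sm[of "1 - e"] z e by force
  show "\<And>x. e < x \<Longrightarrow> x < 1 \<Longrightarrow> Finv (1 - x) < 0"
    using sm[of _ "1 - e"] z e by force
qed

locale hdec =
  fixes h :: "real \<Rightarrow> real"
  assumes nonneg: "\<forall>x\<in>{0<..<1}. h x \<ge> 0"
    and dec: "\<forall>x y. 0 < x \<and> x < y \<and> y < 1 \<longrightarrow> h y < h x"
begin

definition L where "L = Inf (h ` {0<..<1})"

lemma bdd: "bdd_below (h ` {0<..<1})" using nonneg by (auto intro!: bdd_belowI[of _ 0])

lemma L_le: "0 < p \<Longrightarrow> p < 1 \<Longrightarrow> L \<le> h p"
  unfolding L_def using bdd by (auto intro!: cInf_lower)

lemma tendsto_L: "(h \<longlongrightarrow> L) (at_left 1)"
proof (rule order_tendstoI)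
  fix a assume "a < L"
  show "\<forall>\<^sub>F x in at_left 1. a < h x"
  proof (rule eventually_mono[OF eventually_at_left_real[of 0 1]])
    fix x :: real assume "x \<in> {0<..<1}"
    then have "L \<le> h x" using L_le by simp
    then show "a < h x" using \<open>a < L\<close> by linarith
  qed simp
next
  fix a assume "L < a"
  then obtain p where p: "p \<in> {0<..<1}" "h p < a"
    unfolding L_def by (subst (asm) cInf_less_iff) (auto simp: bdd)
  show "\<forall>\<^sub>F x in at_left 1. h x < a"
  proof (rule eventually_mono[OF eventually_at_left_real[of p 1]])
    show "p < 1" using p by simp
    fix x :: real assume "x \<in> {p<..<1}"
    then have "h x < h p" using dec p by auto
    then show "h x < a" using p by linarith
  qed
qed

lemma hext1: "hext h 1 = L"
  unfolding hext_def using tendsto_L by (simp add: tendsto_Lim)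

lemma hext_strict: "0 < p \<Longrightarrow> p < q \<Longrightarrow> q \<le> 1 \<Longrightarrow> hext h q < hext h p"
proof (cases "q < 1")
  case True
  assume "0 < p" "p < q" "q \<le> 1"
  then have "h q < h p" using True dec by blast
  then show ?thesis using True \<open>p < q\<close> unfolding hext_def by simp
next
  case False
  assume a: "0 < p" "p < q" "q \<le> 1"
  then have q: "q = 1" using False by simp
  have "L \<le> h ((p+1)/2)" using a q by (intro L_le) auto
  also have "h ((p+1)/2) < h p" using a q dec by auto
  finally have "L < h p" .
  moreover have "hext h p = h p" using a q unfolding hext_def by simp
  ultimately show ?thesis using q hext1 by simp
qed

lemma hext_mono: "0 < p \<Longrightarrow> p \<le> q \<Longrightarrow> q \<le> 1 \<Longrightarrow> hext h q \<le> hext h p"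
  using hext_strict[of p q] by (cases "p = q") auto

end

lemma inv_lt: "(0::real) \<le> a \<Longrightarrow> a < b \<Longrightarrow> 1/(1+b) < 1/(1+a)"
  by (simp add: divide_strict_left_mono)
lemma inv_le: "(0::real) \<le> a \<Longrightarrow> a \<le> b \<Longrightarrow> 1/(1+b) \<le> 1/(1+a)"
  by (simp add: divide_left_mono)
lemma inv_pos: "(0::real) \<le> a \<Longrightarrow> 0 < 1/(1+a)" by simp
lemma inv_le1: "(0::real) \<le> a \<Longrightarrow> 1/(1+a) \<le> 1" by simp
lemma inv_lt1: "(0::real) < a \<Longrightarrow> 1/(1+a) < 1" by simp

lemma ratio_lt: "(0::real) < x \<Longrightarrow> x < y \<Longrightarrow> y \<le> 1 \<Longrightarrow> 0 < z \<Longrightarrow> z*(1-y)/(1-x) < z*y/x"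
proof -
  assume a: "0 < x" "x < y" "y \<le> 1" "0 < z"
  have "(1-y)/(1-x) < y/x" using a by (simp add: field_simps)
  then show ?thesis using a by (simp add: mult_strict_left_mono times_divide_eq_right[symmetric] del: times_divide_eq_right)
qed

lemma ratio_lt2: "(0::real) \<le> y \<Longrightarrow> y < x \<Longrightarrow> x < 1 \<Longrightarrow> 0 < z \<Longrightarrow> z*y/x < z*(1-y)/(1-x)"
proof -
  assume a: "0 \<le> y" "y < x" "x < 1" "0 < z"
  have "y/x < (1-y)/(1-x)" using a by (simp add: field_simps)
  then show ?thesis using a by (simp add: mult_strict_left_mono times_divide_eq_right[symmetric] del: times_divide_eq_right)
qed

context hdec begin

lemma gfun_pos: assumes "0 < x" "x < y" "y \<le> 1" "0 < z" shows "gfun h x y z > 0"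
proof -
  have x1: "x < 1" using assms by simp
  have n1: "0 \<le> z*(1-y)/(1-x)" using assms x1 by simp
  have n2: "0 < z*y/x" using assms by simp
  have "hext h (1/(1+z*y/x)) > hext h (1/(1+z*(1-y)/(1-x)))"
    by (rule hext_strict[OF inv_pos inv_lt inv_le1]) (use n1 n2 ratio_lt[OF assms] in auto)
  then show ?thesis unfolding gfun_def by simp
qed

lemma gfun_neg: assumes "0 \<le> y" "y < x" "x < 1" "0 < z" shows "gfun h x y z < 0"
proof -
  have n1: "0 < z*(1-y)/(1-x)" using assms by simp
  have n2: "0 \<le> z*y/x" using assms by simp
  have "hext h (1/(1+z*y/x)) < hext h (1/(1+z*(1-y)/(1-x)))"
    by (rule hext_strict[OF inv_pos inv_lt inv_le1]) (use n1 n2 ratio_lt2[OF assms] in auto)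
  then show ?thesis unfolding gfun_def by simp
qed

lemma gfun_mono: assumes "0 < x" "x < 1" "0 \<le> y" "y \<le> y'" "y' \<le> 1" "0 < z"
  shows "gfun h x y z \<le> gfun h x y' z"
proof -
  have a: "hext h (1/(1+z*y'/x)) \<ge> hext h (1/(1+z*y/x))"
    by (rule hext_mono[OF inv_pos inv_le inv_le1]) (use assms in \<open>auto simp: divide_right_mono\<close>)
  have b: "hext h (1/(1+z*(1-y')/(1-x))) \<le> hext h (1/(1+z*(1-y)/(1-x)))"
    by (rule hext_mono[OF inv_pos inv_le inv_le1]) (use assms in \<open>auto simp: divide_right_mono\<close>)
  show ?thesis using a b unfolding gfun_def by simp
qed


end



context hdec begin
lemma gfun_cont: assumes hc: "continuous_on {0<..<1} h" and y: "0 \<le> y" "y \<le> 1" and z: "0 < z"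
  shows "continuous_on {0<..<1} (\<lambda>x. gfun h x y z)"
proof -
  have c1: "continuous_on {0<..<1} (\<lambda>x. hext h (1/(1+z*y/x)))"
  proof (cases "y = 0")
    case True then show ?thesis by simp
  next
    case False
    then have yp: "0 < y" using y by simp
    have "continuous_on {0<..<1} (\<lambda>x. h (1/(1+z*y/x)))"
    proof (rule continuous_on_compose2[OF hc])
      have p: "\<And>x. 0<x \<Longrightarrow> 0 < z*y/x" using yp z by simp
      have q: "\<And>x. 0<x \<Longrightarrow> 1 + z*y/x \<noteq> 0" using p by (metis add_pos_pos less_irrefl zero_less_one)
      show "continuous_on {0<..<1} (\<lambda>x. 1/(1+z*y/x))"
        by (intro continuous_intros) (auto dest: q)
      show "(\<lambda>x. 1/(1+z*y/x)) ` {0<..<1} \<subseteq> {0<..<1}"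
        proof (rule image_subsetI)
 fix x :: real assume "x \<in> {0<..<1}" then have "0 < z*y/x" using p by simp
 then show "1/(1+z*y/x) \<in> {0<..<1}" using inv_lt1[of "z*y/x"] inv_pos[of "z*(1-y)/(1-x)"] by simp
 qed
    qed
    moreover have "\<And>x. x \<in> {0<..<1} \<Longrightarrow> hext h (1/(1+z*y/x)) = h (1/(1+z*y/x))"
    proof -
      fix x :: real assume "x \<in> {0<..<1}"
      then have "0 < z*y/x" using yp z by simp
      then show "hext h (1/(1+z*y/x)) = h (1/(1+z*y/x))" using inv_lt1[of "z*y/x"] unfolding hext_def by simp
    qed
    ultimately show ?thesis by (metis (no_types, lifting) continuous_on_cong)
  qed
  have c2: "continuous_on {0<..<1} (\<lambda>x. hext h (1/(1+z*(1-y)/(1-x))))"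
  proof (cases "y = 1")
    case True then show ?thesis by simp
  next
    case False
    then have yp: "0 < 1 - y" using y by simp
    have "continuous_on {0<..<1} (\<lambda>x. h (1/(1+z*(1-y)/(1-x))))"
    proof (rule continuous_on_compose2[OF hc])
      have p: "\<And>x. x<1 \<Longrightarrow> 0 < z*(1-y)/(1-x)" using yp z by simp
      have q: "\<And>x. x<1 \<Longrightarrow> 1 + z*(1-y)/(1-x) \<noteq> 0" using p by (metis add_pos_pos less_irrefl zero_less_one)
      show "continuous_on {0<..<1} (\<lambda>x. 1/(1+z*(1-y)/(1-x)))"
        by (intro continuous_intros) (auto dest: q)
      show "(\<lambda>x. 1/(1+z*(1-y)/(1-x))) ` {0<..<1} \<subseteq> {0<..<1}"
        proof (rule image_subsetI)
 fix x :: real assume "x \<in> {0<..<1}" then have "0 < z*(1-y)/(1-x)" using p by simp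
 then show "1/(1+z*(1-y)/(1-x)) \<in> {0<..<1}" using inv_lt1[of "z*(1-y)/(1-x)"] inv_pos[of "z*(1-y)/(1-x)"] by simp
 qed
    qed
    moreover have "\<And>x. x \<in> {0<..<1} \<Longrightarrow> hext h (1/(1+z*(1-y)/(1-x))) = h (1/(1+z*(1-y)/(1-x)))"
    proof -
      fix x :: real assume "x \<in> {0<..<1}"
      then have "0 < z*(1-y)/(1-x)" using yp z by simp
      then show "hext h (1/(1+z*(1-y)/(1-x))) = h (1/(1+z*(1-y)/(1-x)))" using inv_lt1[of "z*(1-y)/(1-x)"] unfolding hext_def by simp
    qed
    ultimately show ?thesis by (metis (no_types, lifting) continuous_on_cong)
  qed
  show ?thesis unfolding gfun_def by (rule continuous_on_diff[OF c1 c2])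
qed

end



lemma cont_at01: "continuous_on {0<..<1} f \<Longrightarrow> 0 < (x::real) \<Longrightarrow> x < 1 \<Longrightarrow> (f \<longlongrightarrow> f x) (at x)"
  using continuous_on_eq_continuous_at[of "{0<..<1}" f] by (simp add: isCont_def)

lemma sup_root:
  fixes f :: "real \<Rightarrow> real"
  assumes cont: "continuous_on {0<..<1} f" and e: "0 < e" "e < 1" and fe: "f e < 0"
    and S: "S = {x\<in>{0<..e}. f x \<ge> 0}" and ne: "S \<noteq> {}"
  shows "f (Sup S) = 0 \<and> 0 < Sup S \<and> Sup S < e"
proof -
  define R where "R = Sup S"
  have bdd: "bdd_above S" using S by (auto intro!: bdd_aboveI[of _ e])
  obtain s where s: "s \<in> S" using ne by blast
  have "s \<le> R" unfolding R_def using s bdd by (rule cSup_upper)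
  then have R0: "0 < R" using s S by auto
  have Re: "R \<le> e" unfolding R_def using ne S by (intro cSup_least) auto
  have lim: "(f \<longlongrightarrow> f R) (at R)" using cont_at01[OF cont R0] Re e by simp
  have c1: "f R \<ge> 0"
  proof (rule ccontr)
    assume "\<not> f R \<ge> 0"
    then have "f R < 0" by simp
    from order_tendstoD(2)[OF lim this] obtain d where d: "d > 0"
      "\<And>x. x \<noteq> R \<Longrightarrow> dist x R < d \<Longrightarrow> f x < 0"
      unfolding eventually_at by auto
    have "R - d < Sup S" using d R_def by simp
    then obtain t where t: "t \<in> S" "R - d < t" using less_cSup_iff[OF ne bdd] by auto
    have "t \<le> R" unfolding R_def using t(1) bdd by (rule cSup_upper)
    show False
    proof (cases "t = R")
      case True then show False using t S \<open>f R < 0\<close> by auto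
    next
      case False
      then have "f t < 0" using d(2)[of t] t \<open>t \<le> R\<close> by (simp add: dist_real_def)
      then show False using t S by auto
    qed
  qed
  have c2: "f R \<le> 0"
  proof (rule ccontr)
    assume "\<not> f R \<le> 0"
    then have fR: "f R > 0" by simp
    then have "R \<noteq> e" using fe by auto
    then have Re': "R < e" using Re by simp
    from order_tendstoD(1)[OF lim fR] obtain d where d: "d > 0"
      "\<And>x. x \<noteq> R \<Longrightarrow> dist x R < d \<Longrightarrow> 0 < f x"
      unfolding eventually_at by auto
    define x where "x = R + min d (e - R) / 2"
    have x: "R < x" "x \<le> e" "dist x R < d" using d Re' unfolding x_def by (auto simp: dist_real_def min_def field_simps)
    then have "f x > 0" using d(2)[of x] by simp
    then have "x \<in> S" using S x R0 by auto
    then have "x \<le> R" unfolding R_def using bdd by (rule cSup_upper)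
    then show False using x by simp
  qed
  have "f R = 0" using c1 c2 by simp
  moreover have "R \<noteq> e" using fe \<open>f R = 0\<close> by auto
  ultimately show ?thesis using R0 Re unfolding R_def by simp
qed

lemma inf_root:
  fixes f :: "real \<Rightarrow> real"
  assumes cont: "continuous_on {0<..<1} f" and e: "0 < e" "e < 1" and fe: "f e > 0"
    and S: "S = {x\<in>{e..<1}. f x \<le> 0}" and ne: "S \<noteq> {}"
  shows "f (Inf S) = 0 \<and> e < Inf S \<and> Inf S < 1"
proof -
  define R where "R = Inf S"
  have bdd: "bdd_below S" using S by (auto intro!: bdd_belowI[of _ e])
  obtain s where s: "s \<in> S" using ne by blast
  have "R \<le> s" unfolding R_def using s bdd by (rule cInf_lower)
  then have R1: "R < 1" using s S by auto
  have Re: "e \<le> R" unfolding R_def using ne S by (intro cInf_greatest) auto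
  have lim: "(f \<longlongrightarrow> f R) (at R)" using cont_at01[OF cont _ R1] Re e by simp
  have c1: "f R \<le> 0"
  proof (rule ccontr)
    assume "\<not> f R \<le> 0"
    then have "f R > 0" by simp
    from order_tendstoD(1)[OF lim this] obtain d where d: "d > 0"
      "\<And>x. x \<noteq> R \<Longrightarrow> dist x R < d \<Longrightarrow> 0 < f x"
      unfolding eventually_at by auto
    have "Inf S < R + d" using d R_def by simp
    then obtain t where t: "t \<in> S" "t < R + d" using cInf_less_iff[OF ne bdd] by auto
    have "R \<le> t" unfolding R_def using t(1) bdd by (rule cInf_lower)
    show False
    proof (cases "t = R")
      case True then show False using t S \<open>f R > 0\<close> by auto
    next
      case False
      then have "f t > 0" using d(2)[of t] t \<open>R \<le> t\<close> by (simp add: dist_real_def)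
      then show False using t S by auto
    qed
  qed
  have c2: "f R \<ge> 0"
  proof (rule ccontr)
    assume "\<not> f R \<ge> 0"
    then have fR: "f R < 0" by simp
    then have "R \<noteq> e" using fe by auto
    then have Re': "e < R" using Re by simp
    from order_tendstoD(2)[OF lim fR] obtain d where d: "d > 0"
      "\<And>x. x \<noteq> R \<Longrightarrow> dist x R < d \<Longrightarrow> f x < 0"
      unfolding eventually_at by auto
    define x where "x = R - min d (R - e) / 2"
    have x: "x < R" "e \<le> x" "dist x R < d" using d Re' unfolding x_def by (auto simp: dist_real_def min_def field_simps)
    then have "f x < 0" using d(2)[of x] by simp
    then have "x \<in> S" using S x R1 by auto
    then have "R \<le> x" unfolding R_def using bdd by (rule cInf_lower)
    then show False using x by simp
  qed
  have "f R = 0" using c1 c2 by simp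
  moreover have "R \<noteq> e" using fe \<open>f R = 0\<close> by auto
  ultimately show ?thesis using R1 Re unfolding R_def by simp
qed

lemma tarski_real:
  fixes T :: "real \<Rightarrow> real"
  assumes into: "\<forall>x\<in>{0..e}. T x \<in> {0..e}"
    and mono: "\<forall>x y. 0 \<le> x \<and> x \<le> y \<and> y \<le> e \<longrightarrow> T x \<le> T y" and e: "0 \<le> e"
  shows "\<exists>x\<in>{0..e}. T x = x"
proof -
  define A where "A = {x\<in>{0..e}. x \<le> T x}"
  have "0 \<in> A" using into e unfolding A_def by auto
  then have ne: "A \<noteq> {}" by auto
  have bdd: "bdd_above A" unfolding A_def by (auto intro!: bdd_aboveI[of _ e])
  define X where "X = Sup A"
  have X0: "0 \<le> X" unfolding X_def using \<open>0 \<in> A\<close> bdd by (rule cSup_upper)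
  have Xe: "X \<le> e" unfolding X_def using ne by (intro cSup_least) (auto simp: A_def)
  have "X \<le> T X" unfolding X_def
  proof (rule cSup_least[OF ne])
    fix a assume a: "a \<in> A"
    have "a \<le> Sup A" using a bdd by (rule cSup_upper)
    then have "T a \<le> T (Sup A)" using mono a Xe X_def unfolding A_def by auto
    then show "a \<le> T (Sup A)" using a unfolding A_def by auto
  qed
  then have "T X \<le> T (T X)" using mono into X0 Xe by auto
  then have "T X \<in> A" using into X0 Xe unfolding A_def by auto
  then have "T X \<le> X" unfolding X_def using bdd by (rule cSup_upper)
  then show ?thesis using \<open>X \<le> T X\<close> X0 Xe by force
qed




theorem proposition2:
  fixes M :: "'a measure"
    and Dw Dm :: "'a \<Rightarrow> real"
    and hw hm Fwinv Fminv :: "real \<Rightarrow> real"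
    and mu_w mu_m :: real
  assumes "prob_space M"
    and "Dw \<in> borel_measurable M" and "Dm \<in> borel_measurable M"
    and "mu_w > 0" and "mu_m > 0"
    and "\<forall>x\<in>{0<..<1}. hw x \<ge> 0" and "\<forall>x\<in>{0<..<1}. hm x \<ge> 0"
    and "\<forall>x y. 0 < x \<and> x < y \<and> y < 1 \<longrightarrow> hw y < hw x"
    and "\<forall>x y. 0 < x \<and> x < y \<and> y < 1 \<longrightarrow> hm y < hm x"
    and "hw C1_differentiable_on {0<..<1}" and "hm C1_differentiable_on {0<..<1}"
    and "cdf (distr M borel Dw) C1_differentiable_on UNIV"
    and "cdf (distr M borel Dm) C1_differentiable_on UNIV"
    and "cont_inverse_cdf (cdf (distr M borel Dw)) Fwinv"
    and "cont_inverse_cdf (cdf (distr M borel Dm)) Fminv"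
    and "measure M {\<omega>\<in>space M. Dw \<omega> > 0} \<in> {0<..<1}"
    and "measure M {\<omega>\<in>space M. Dm \<omega> > 0} \<in> {0<..<1}"
    and "measure M {\<omega>\<in>space M. Dw \<omega> > 0} < measure M {\<omega>\<in>space M. Dm \<omega> > 0}"
  shows "(\<exists>rw rm. equilibrium Fwinv Fminv hw hm (mu_w / mu_m) rw rm \<and>
                 rw < measure M {\<omega>\<in>space M. Dw \<omega> > 0} \<and>
                 measure M {\<omega>\<in>space M. Dm \<omega> > 0} < rm) \<and>
         \<not> (\<exists>rw rm. equilibrium Fwinv Fminv hw hm (mu_w / mu_m) rw rm \<and>
                 measure M {\<omega>\<in>space M. Dw \<omega> > 0} < rw \<and> rw < rm \<and>
                 rm < measure M {\<omega>\<in>space M. Dm \<omega> > 0})"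
proof -
  interpret hw: hdec hw using assms(6,8) by unfold_locales
  interpret hm: hdec hm using assms(7,9) by unfold_locales
  define ew where "ew = measure M {\<omega>\<in>space M. Dw \<omega> > 0}"
  define em where "em = measure M {\<omega>\<in>space M. Dm \<omega> > 0}"
  define r where "r = mu_w / mu_m"
  have r: "0 < r" "0 < 1/r" using assms(4,5) r_def by auto
  have ew: "0 < ew" "ew < 1" and em: "0 < em" "em < 1" and ewm: "ew < em"
    using assms(16,17,18) ew_def em_def by auto
  note Fw = Finv_facts[OF assms(14) cdf_facts(2)[OF assms(1,2)] cdf_facts(1)[OF assms(1,2), folded ew_def] ew]
  note Fm = Finv_facts[OF assms(15) cdf_facts(2)[OF assms(1,3)] cdf_facts(1)[OF assms(1,3), folded em_def] em]
  have hwc: "continuous_on {0<..<1} hw" using assms(10) by (rule C1_differentiable_imp_continuous_on)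
  have hmc: "continuous_on {0<..<1} hm" using assms(11) by (rule C1_differentiable_imp_continuous_on)
  have Fwc: "continuous_on {0<..<1} Fwinv" using assms(14) unfolding cont_inverse_cdf_def by simp
  have Fmc: "continuous_on {0<..<1} Fminv" using assms(15) unfolding cont_inverse_cdf_def by simp
  have Fwc': "continuous_on {0<..<1} (\<lambda>x. Fwinv (1 - x))"
    by (rule continuous_on_compose2[OF Fwc]) (auto intro!: continuous_intros)
  have Fmc': "continuous_on {0<..<1} (\<lambda>x. Fminv (1 - x))"
    by (rule continuous_on_compose2[OF Fmc]) (auto intro!: continuous_intros)
  define phi where "phi x y = Fwinv (1 - x) - gfun hw x y (1/r)" for x y
  define psi where "psi x y = Fminv (1 - y) - gfun hm y x r" for x y
  define Sw where "Sw y = {x\<in>{0<..ew}. phi x y \<ge> 0}" for y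
  define Rw where "Rw y = (if Sw y = {} then 0 else Sup (Sw y))" for y
  define Sm where "Sm x = {y\<in>{em..<1}. psi x y \<le> 0}" for x
  define Rm where "Rm x = (if Sm x = {} then 1 else Inf (Sm x))" for x
  have contphi: "continuous_on {0<..<1} (\<lambda>x. phi x y)" if "0 \<le> y" "y \<le> 1" for y
    unfolding phi_def by (intro continuous_on_diff Fwc' hw.gfun_cont[OF hwc that r(2)])
  have contpsi: "continuous_on {0<..<1} (\<lambda>y. psi x y)" if "0 \<le> x" "x \<le> 1" for x
    unfolding psi_def by (intro continuous_on_diff Fmc' hm.gfun_cont[OF hmc that r(1)])
  have Rw_prop: "Rw y \<in> {0..<ew} \<and> (0 < Rw y \<longrightarrow> phi (Rw y) y = 0) \<and>
      (Rw y = 0 \<longrightarrow> (\<forall>x\<in>{0<..ew}. phi x y < 0))" if y: "em < y" "y \<le> 1" for y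
  proof -
    have "phi ew y < 0" unfolding phi_def using Fw(1) hw.gfun_pos[of ew y "1/r"] ew ewm y r by simp
    show ?thesis
    proof (cases "Sw y = {}")
      case True
      then show ?thesis unfolding Rw_def Sw_def using ew by auto
    next
      case False
      from sup_root[OF contphi[of y] ew \<open>phi ew y < 0\<close> Sw_def False] y em
      show ?thesis unfolding Rw_def using False by simp
    qed
  qed
  have Rm_prop: "Rm x \<in> {em<..1} \<and> (Rm x < 1 \<longrightarrow> psi x (Rm x) = 0) \<and>
      (Rm x = 1 \<longrightarrow> (\<forall>y\<in>{em..<1}. psi x y > 0))" if x: "0 \<le> x" "x \<le> ew" for x
  proof -
    have "psi x em > 0" unfolding psi_def using Fm(1) hm.gfun_neg[of x em r] em ewm x r by simp
    show ?thesis
    proof (cases "Sm x = {}")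
      case True
      then show ?thesis unfolding Rm_def Sm_def using em by auto
    next
      case False
      from inf_root[OF contpsi[of x] em \<open>psi x em > 0\<close> Sm_def False] x ew
      show ?thesis unfolding Rm_def using False by simp
    qed
  qed
  have Rw_mono: "Rw y' \<le> Rw y" if "em < y" "y \<le> y'" "y' \<le> 1" for y y'
  proof -
    have sub: "Sw y' \<subseteq> Sw y"
    proof
      fix x assume "x \<in> Sw y'"
      then have x: "0 < x" "x \<le> ew" "phi x y' \<ge> 0" unfolding Sw_def by auto
      have "gfun hw x y (1/r) \<le> gfun hw x y' (1/r)"
        using hw.gfun_mono[of x y y' "1/r"] x that ew em r by simp
      then have "phi x y \<ge> 0" using x(3) unfolding phi_def by simp
      then show "x \<in> Sw y" using x unfolding Sw_def by simp
    qed
    show ?thesis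
    proof (cases "Sw y' = {}")
      case True
      then show ?thesis using Rw_prop[of y] that unfolding Rw_def by auto
    next
      case False
      then have "Sw y \<noteq> {}" using sub by auto
      moreover have "bdd_above (Sw y)" unfolding Sw_def by (auto intro!: bdd_aboveI[of _ ew])
      ultimately show ?thesis unfolding Rw_def using False sub by (simp add: cSup_subset_mono)
    qed
  qed
  have Rm_mono: "Rm x' \<le> Rm x" if "0 \<le> x" "x \<le> x'" "x' \<le> ew" for x x'
  proof -
    have sub: "Sm x \<subseteq> Sm x'"
    proof
      fix y assume "y \<in> Sm x"
      then have y: "em \<le> y" "y < 1" "psi x y \<le> 0" unfolding Sm_def by auto
      have "gfun hm y x r \<le> gfun hm y x' r"
        using hm.gfun_mono[of y x x' r] y that ew em r by simp
      then have "psi x' y \<le> 0" using y(3) unfolding psi_def by simp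
      then show "y \<in> Sm x'" using y unfolding Sm_def by simp
    qed
    show ?thesis
    proof (cases "Sm x = {}")
      case True
      then show ?thesis using Rm_prop[of x'] that unfolding Rm_def by auto
    next
      case False
      then have "Sm x' \<noteq> {}" using sub by auto
      moreover have "bdd_below (Sm x')" unfolding Sm_def by (auto intro!: bdd_belowI[of _ em])
      ultimately show ?thesis unfolding Rm_def using False sub by (simp add: cInf_superset_mono)
    qed
  qed
  have "\<exists>x\<in>{0..ew}. Rw (Rm x) = x"
  proof (rule tarski_real)
    show "\<forall>x\<in>{0..ew}. Rw (Rm x) \<in> {0..ew}"
    proof
      fix x assume "x \<in> {0..ew}"
      then have "Rm x \<in> {em<..1}" using Rm_prop[of x] by auto
      then show "Rw (Rm x) \<in> {0..ew}" using Rw_prop[of "Rm x"] by auto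
    qed
    show "\<forall>x y. 0 \<le> x \<and> x \<le> y \<and> y \<le> ew \<longrightarrow> Rw (Rm x) \<le> Rw (Rm y)"
    proof (intro allI impI)
      fix x y assume a: "0 \<le> x \<and> x \<le> y \<and> y \<le> ew"
      then have "Rm y \<le> Rm x" using Rm_mono by auto
      moreover have "Rm y \<in> {em<..1}" "Rm x \<in> {em<..1}" using Rm_prop[of x] Rm_prop[of y] a by auto
      ultimately show "Rw (Rm x) \<le> Rw (Rm y)" using Rw_mono by auto
    qed
    show "0 \<le> ew" using ew by simp
  qed
  then obtain X where X: "X \<in> {0..ew}" "Rw (Rm X) = X" by blast
  define Y where "Y = Rm X"
  have PY: "Y \<in> {em<..1}" "Y < 1 \<longrightarrow> psi X Y = 0" "Y = 1 \<longrightarrow> (\<forall>y\<in>{em..<1}. psi X y > 0)"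
    using Rm_prop[of X] X unfolding Y_def by auto
  have PX: "X \<in> {0..<ew}" "0 < X \<longrightarrow> phi X Y = 0" "X = 0 \<longrightarrow> (\<forall>x\<in>{0<..ew}. phi x Y < 0)"
    using Rw_prop[of Y] PY(1) X(2) unfolding Y_def by auto
  have eq: "equilibrium Fwinv Fminv hw hm r X Y"
    unfolding equilibrium_def
  proof (intro conjI impI)
    show "X \<in> {0..1}" using PX(1) ew by auto
    show "Y \<in> {0..1}" using PY(1) em by auto
    show "Fwinv (1 - X) = gfun hw X Y (1 / r)" if "0 < X \<and> X < 1"
      using PX(2) that unfolding phi_def by simp
    show "Fminv (1 - Y) = gfun hm Y X r" if "0 < Y \<and> Y < 1"
      using PY(2) that unfolding psi_def by simp
    show "\<exists>db>0. \<forall>\<delta>. 0 < \<delta> \<and> \<delta> < db \<and> \<delta> < 1 \<longrightarrow> Fwinv (1 - \<delta>) \<le> gfun hw \<delta> Y (1 / r)"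
      if "X = 0"
    proof (intro exI[of _ ew] conjI allI impI)
      fix d :: real assume "0 < d \<and> d < ew \<and> d < 1"
      then have "phi d Y < 0" using PX(3) that by auto
      then show "Fwinv (1 - d) \<le> gfun hw d Y (1 / r)" unfolding phi_def by simp
    qed (use ew in simp)
    show "\<exists>db>0. \<forall>\<delta>. 0 < \<delta> \<and> \<delta> < db \<and> \<delta> < 1 \<longrightarrow> gfun hm (1 - \<delta>) X r \<le> Fminv \<delta>"
      if "Y = 1"
    proof (intro exI[of _ "1 - em"] conjI allI impI)
      fix d :: real assume d: "0 < d \<and> d < 1 - em \<and> d < 1"
      then have "psi X (1 - d) > 0" using PY(3) that by auto
      then show "gfun hm (1 - d) X r \<le> Fminv d" unfolding psi_def by simp
    qed (use em in simp)
    show "\<exists>db>0. \<forall>\<delta>. 0 < \<delta> \<and> \<delta> < db \<and> \<delta> < 1 \<longrightarrow> gfun hw (1 - \<delta>) Y (1 / r) \<le> Fwinv \<delta>"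
      if "X = 1" using that PX(1) ew by simp
    show "\<exists>db>0. \<forall>\<delta>. 0 < \<delta> \<and> \<delta> < db \<and> \<delta> < 1 \<longrightarrow> Fminv (1 - \<delta>) \<le> gfun hm \<delta> X r"
      if "Y = 0" using that PY(1) em by simp
  qed
  have part1: "\<exists>rw rm. equilibrium Fwinv Fminv hw hm r rw rm \<and> rw < ew \<and> em < rm"
    using eq PX(1) PY(1) by auto
  have part2: "\<not> (\<exists>rw rm. equilibrium Fwinv Fminv hw hm r rw rm \<and> ew < rw \<and> rw < rm \<and> rm < em)"
  proof
    assume "\<exists>rw rm. equilibrium Fwinv Fminv hw hm r rw rm \<and> ew < rw \<and> rw < rm \<and> rm < em"
    then obtain rw rm where e: "equilibrium Fwinv Fminv hw hm r rw rm" "ew < rw" "rw < rm" "rm < em" by blast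
    have rw: "0 < rw" "rw < 1" using e ew em by auto
    then have "Fwinv (1 - rw) = gfun hw rw rm (1/r)" using e(1) unfolding equilibrium_def by blast
    moreover have "Fwinv (1 - rw) < 0" using Fw(3) e(2) rw by simp
    moreover have "gfun hw rw rm (1/r) > 0" using hw.gfun_pos[of rw rm "1/r"] rw e em r by simp
    ultimately show False by simp
  qed
  show ?thesis using part1 part2 unfolding ew_def em_def r_def by simp
qed

end
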